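(* Fix $\epsilon_2>0$ and $(u_\pm,v_\pm)$ with $v_\pm>0$ and $u_->u_++2\epsilon_2$. For $0<\epsilon_1$ small, let $(u_*^{\epsilon_2},v_*^{\epsilon_2})$ (depending on $\epsilon_1$) be the intermediate state of the two-shock Riemann solution of the perturbed Brio system with data $(u_\pm,v_\pm)$. Then $\lim_{\epsilon_1\to0}v_*^{\epsilon_2}=+\infty$.
   Context: Perturbed Brio system: $u_t+(\tfrac12u^2+\tfrac12\epsilon_1v^2)_x=0$, $v_t+(uv-\epsilon_2v)_x=0$, $\epsilon_1,\epsilon_2>0$, $v>0$. The two-shock intermediate state $(u_*,v_* )$ satisfies $v_*>\max(v_-,v_+)$, $u_+<u_*<u_-$, $$u_*=u_-+(v_*-v_-)\frac{\epsilon_2-\sqrt{\epsilon_2^2+4\epsilon_1(v_*+v_-)^2}}{v_*+v_-},\qquad u_+=u_*+(v_+-v_* )\frac{\epsilon_2+\sqrt{\epsilon_2^2+4\epsilon_1(v_*+v_+)^2}}{v_*+v_+}.$$ *)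

theory Defs
  imports Complex_Main
begin

text \<open>Two-shock intermediate state (u_*, v_*) of the perturbed Brio system
  u_t + (u^2/2 + e1 v^2/2)_x = 0,  v_t + (u v - e2 v)_x = 0
  with Riemann data (u_-, v_-), (u_+, v_+).\<close>

definition two_shock_state ::
  "real \<Rightarrow> real \<Rightarrow> real \<Rightarrow> real \<Rightarrow> real \<Rightarrow> real \<Rightarrow> real \<Rightarrow> real \<Rightarrow> bool" where
  "two_shock_state e1 e2 um vm up vp us vs \<longleftrightarrow>
     vs > max vm vp \<and> up < us \<and> us < um \<and>
     us = um + (vs - vm) * (e2 - sqrt (e2^2 + 4 * e1 * (vs + vm)^2)) / (vs + vm) \<and>
     up = us + (vp - vs) * (e2 + sqrt (e2^2 + 4 * e1 * (vs + vp)^2)) / (vs + vp)"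

end

theory Submission
  imports Defs
begin

definition GG :: "real \<Rightarrow> real \<Rightarrow> real \<Rightarrow> real \<Rightarrow> real \<Rightarrow> real" where
  "GG e1 e2 vm vp v = (v-vm)*(sqrt (e2^2 + 4*e1*(v+vm)^2) - e2)/(v+vm)
      + (v-vp)*(e2 + sqrt (e2^2 + 4*e1*(v+vp)^2))/(v+vp)"

lemma ratio_le: fixes a b c :: real
  assumes "0 < b" "b \<le> a" "0 \<le> c" shows "(a-b)*c/(a+b) \<le> c"
proof -
  have "c*(a-b) \<le> c*(a+b)" using assms by (intro mult_left_mono) auto
  hence "(a-b)*c \<le> c*(a+b)" by (simp only: mult.commute)
  thus ?thesis using assms by (simp add: pos_divide_le_eq)
qed

lemma GG_bound:
  fixes e1 e2 vm vp v M :: real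
  assumes "e1 > 0" "e2 > 0" "vm > 0" "vp > 0" "vm \<le> v" "vp \<le> v" "v \<le> M"
  shows "GG e1 e2 vm vp v \<le> 2 * sqrt (e2^2 + 16*e1*M^2)"
proof -
  define s where "s = sqrt (e2^2 + 4*e1*(v+vm)^2)"
  define t where "t = sqrt (e2^2 + 4*e1*(v+vp)^2)"
  define B where "B = sqrt (e2^2 + 16*e1*M^2)"
  have se: "e2 \<le> s"
  proof -
    have "sqrt (e2^2) \<le> sqrt (e2^2 + 4*e1*(v+vm)^2)" using assms by (intro real_sqrt_le_mono) simp
    thus ?thesis using assms unfolding s_def by simp
  qed
  have "(v+vm)^2 \<le> (2*M)^2" using assms by (intro power_mono) auto
  hence "4*e1*(v+vm)^2 \<le> 16*e1*M^2" using assms by (simp add: power_mult_distrib)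
  hence sB: "s \<le> B" unfolding s_def B_def by simp
  have "(v+vp)^2 \<le> (2*M)^2" using assms by (intro power_mono) auto
  hence "4*e1*(v+vp)^2 \<le> 16*e1*M^2" using assms by (simp add: power_mult_distrib)
  hence tB: "t \<le> B" unfolding t_def B_def by simp
  have t0: "0 \<le> t" unfolding t_def using assms by simp
  have 1: "(v-vm)*(s-e2)/(v+vm) \<le> s - e2" using ratio_le[of vm v "s-e2"] assms se by simp
  have 2: "(v-vp)*(e2+t)/(v+vp) \<le> e2 + t" using ratio_le[of vp v "e2+t"] assms t0 by simp
  have "GG e1 e2 vm vp v \<le> s + t" unfolding GG_def s_def[symmetric] t_def[symmetric] using 1 2 by linarith
  thus ?thesis using sB tB B_def by linarith
qed

lemma small_bound:
  fixes e1 e2 D M :: real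
  assumes "e1 > 0" "e2 > 0" "M > 0" "D > 2*e2" "e1 < (D^2/4 - e2^2)/(16*M^2)"
  shows "2 * sqrt (e2^2 + 16*e1*M^2) < D"
proof -
  have "16*e1*M^2 < D^2/4 - e2^2" using assms by (simp add: less_divide_eq mult_ac)
  hence "e2^2 + 16*e1*M^2 < (D/2)^2" by (simp add: power_divide)
  hence "sqrt (e2^2 + 16*e1*M^2) < sqrt ((D/2)^2)" by (rule real_sqrt_less_mono)
  thus ?thesis using assms by simp
qed

lemma delta_pos:
  fixes e2 D M :: real
  assumes "e2 > 0" "M > 0" "D > 2*e2"
  shows "(D^2/4 - e2^2)/(16*M^2) > 0"
proof -
  have "(2*e2)^2 < D^2" using assms by (intro power_strict_mono) auto
  hence "D^2/4 - e2^2 > 0" by (simp add: power_mult_distrib)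
  thus ?thesis using assms by simp
qed

lemma state_GG:
  assumes "two_shock_state e1 e2 um vm up vp us vs" "vm > 0" "vp > 0"
  shows "GG e1 e2 vm vp vs = um - up" "vs > max vm vp"
proof -
  from assms have vs: "vs > vm" "vs > vp" by (auto simp: two_shock_state_def)
  hence "vs + vm \<noteq> 0" "vs + vp \<noteq> 0" using assms by auto
  define s where "s = sqrt (e2^2 + 4*e1*(vs+vm)^2)"
  define t where "t = sqrt (e2^2 + 4*e1*(vs+vp)^2)"
  have a: "(vs - vm) * (e2 - s) / (vs + vm) = - ((vs - vm) * (s - e2) / (vs + vm))"
  proof -
    have "(vs - vm) * (e2 - s) = - ((vs - vm) * (s - e2))" by algebra
    thus ?thesis by simp
  qed
  have b: "(vp - vs) * (e2 + t) / (vs + vp) = - ((vs - vp) * (e2 + t) / (vs + vp))"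
  proof -
    have "(vp - vs) * (e2 + t) = - ((vs - vp) * (e2 + t))" by algebra
    thus ?thesis by simp
  qed
  from assms(1) have "us = um + (vs - vm) * (e2 - s) / (vs + vm)"
     "up = us + (vp - vs) * (e2 + t) / (vs + vp)"
    unfolding two_shock_state_def s_def t_def by auto
  thus "GG e1 e2 vm vp vs = um - up"
    unfolding GG_def s_def[symmetric] t_def[symmetric] a b by linarith
  show "vs > max vm vp" using vs by simp
qed

lemma GG_state:
  assumes "GG e1 e2 vm vp vs = um - up" "vs > max vm vp" "vm > 0" "vp > 0" "e1 > 0" "e2 > 0"
  shows "two_shock_state e1 e2 um vm up vp
     (um + (vs - vm) * (e2 - sqrt (e2^2 + 4 * e1 * (vs + vm)^2)) / (vs + vm)) vs"
proof -
  define s where "s = sqrt (e2^2 + 4*e1*(vs+vm)^2)"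
  define t where "t = sqrt (e2^2 + 4*e1*(vs+vp)^2)"
  have v: "vs > vm" "vs > vp" using assms by auto
  have "e2^2 < e2^2 + 4*e1*(vs+vm)^2" using assms v by simp
  hence "sqrt (e2^2) < s" unfolding s_def by (rule real_sqrt_less_mono)
  hence se: "e2 < s" using assms by simp
  have t0: "0 \<le> t" unfolding t_def using assms by simp
  have p1: "(vs - vm) * (s - e2) / (vs + vm) > 0" using v se assms by simp
  have p2: "(vs - vp) * (e2 + t) / (vs + vp) > 0" using v t0 assms by simp
  have eq: "(vs-vm)*(s - e2)/(vs+vm) + (vs-vp)*(e2 + t)/(vs+vp) = um - up"
    using assms(1) unfolding GG_def s_def t_def .
  have a: "(vs - vm) * (e2 - s) / (vs + vm) = - ((vs - vm) * (s - e2) / (vs + vm))"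
  proof -
    have "(vs - vm) * (e2 - s) = - ((vs - vm) * (s - e2))" by algebra
    thus ?thesis by simp
  qed
  have b: "(vp - vs) * (e2 + t) / (vs + vp) = - ((vs - vp) * (e2 + t) / (vs + vp))"
  proof -
    have "(vp - vs) * (e2 + t) = - ((vs - vp) * (e2 + t))" by algebra
    thus ?thesis by simp
  qed
  show ?thesis unfolding two_shock_state_def s_def[symmetric] t_def[symmetric] a b
    using p1 p2 eq assms(2) by linarith
qed

theorem lemma6p1:
  fixes e2 um vm up vp :: real
  assumes "e2 > 0" and "vm > 0" and "vp > 0" and "um > up + 2 * e2"
  shows "(\<forall>\<^sub>F e1 in at_right 0. \<exists>us vs. two_shock_state e1 e2 um vm up vp us vs)
    \<and> (\<forall>ustar vstar :: real \<Rightarrow> real.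
          (\<forall>\<^sub>F e1 in at_right 0. two_shock_state e1 e2 um vm up vp (ustar e1) (vstar e1))
          \<longrightarrow> filterlim vstar at_top (at_right 0))"
proof (intro conjI allI impI)
  define D where "D = um - up"
  have D: "D > 2*e2" using assms D_def by simp
  define m where "m = max vm vp"
  have m: "m > 0" "vm \<le> m" "vp \<le> m" using assms m_def by auto
  define d where "d = (D^2/4 - e2^2)/(16*m^2)"
  have d: "d > 0" unfolding d_def using delta_pos[OF assms(1) m(1) D] .
  show "\<forall>\<^sub>F e1 in at_right 0. \<exists>us vs. two_shock_state e1 e2 um vm up vp us vs"
    unfolding eventually_at_right_field
  proof (rule exI[of _ d], intro conjI allI impI)
    show "0 < d" by fact
    fix e1 :: real assume e1: "0 < e1" "e1 < d"
    define G where "G = GG e1 e2 vm vp"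
    have Gm: "G m < D"
      using GG_bound[OF e1(1) assms(1-3) m(2,3), of m] small_bound[OF e1(1) assms(1) m(1) D] e1
      unfolding G_def d_def by simp
    define V where "V = 3*m + (2*D + e2)/(2*sqrt e1) + 1"
    have se1: "sqrt e1 > 0" using e1 by simp
    have Vm: "V \<ge> m" unfolding V_def using m D assms se1 by (simp add: field_simps)
    have "(2*D + e2)/(2*sqrt e1) \<ge> 0" using D assms se1 by simp
    hence V3: "V \<ge> 3*vm" "V \<ge> vp" unfolding V_def using m by linarith+
    have "2*sqrt e1 * V \<ge> 2*D + e2" unfolding V_def using m D assms se1
      by (simp add: field_simps)
    hence "2*sqrt e1 * (V+vm) \<ge> 2*D + e2" using se1 assms
      by (smt (verit) mult_left_mono)
    moreover have "sqrt (e2^2 + 4*e1*(V+vm)^2) \<ge> sqrt (4*e1*(V+vm)^2)" by simp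
    moreover have "sqrt (4*e1*(V+vm)^2) = 2*sqrt e1*(V+vm)"
      using e1 m Vm assms by (simp add: real_sqrt_mult)
    ultimately have sV: "sqrt (e2^2 + 4*e1*(V+vm)^2) - e2 \<ge> 2*D" by linarith
    have r: "(V-vm)/(V+vm) \<ge> 1/2" using V3 assms by (simp add: field_simps)
    have "(V-vm)*(sqrt (e2^2 + 4*e1*(V+vm)^2) - e2)/(V+vm)
        = ((V-vm)/(V+vm)) * (sqrt (e2^2 + 4*e1*(V+vm)^2) - e2)" by simp
    also have "\<dots> \<ge> (1/2) * (2*D)" using r sV D assms
      by (intro mult_mono) (auto intro: order_trans[OF _ r])
    finally have t1: "(V-vm)*(sqrt (e2^2 + 4*e1*(V+vm)^2) - e2)/(V+vm) \<ge> D" by simp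
    have t2: "(V-vp)*(e2 + sqrt (e2^2 + 4*e1*(V+vp)^2))/(V+vp) \<ge> 0"
      using V3 assms e1 by (intro divide_nonneg_pos mult_nonneg_nonneg) auto
    have GV: "G V \<ge> D" unfolding G_def GG_def using t1 t2 by linarith
    have cont: "continuous_on {m..V} G"
      unfolding G_def GG_def using m assms
      by (intro continuous_intros) auto
    obtain v where v: "m \<le> v" "v \<le> V" "G v = D"
      using IVT'[of G m D V, OF _ GV Vm cont] Gm by auto
    have "v \<noteq> m" using v Gm by auto
    hence "v > max vm vp" using v m_def by (simp add: max_def split: if_splits)
    from GG_state[OF _ this assms(2,3) e1(1) assms(1)] v D_def G_def
    show "\<exists>us vs. two_shock_state e1 e2 um vm up vp us vs" by blast
  qed
  fix ustar vstar :: "real \<Rightarrow> real"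
  assume ev: "\<forall>\<^sub>F e1 in at_right 0. two_shock_state e1 e2 um vm up vp (ustar e1) (vstar e1)"
  show "filterlim vstar at_top (at_right 0)"
    unfolding filterlim_at_top_gt[where c=0]
  proof (intro allI impI)
    fix Z :: real assume Z: "Z > 0"
    define M where "M = max Z m"
    have M: "M > 0" "Z \<le> M" using Z m M_def by auto
    define d' where "d' = (D^2/4 - e2^2)/(16*M^2)"
    have d': "d' > 0" unfolding d'_def using delta_pos[OF assms(1) M(1) D] .
    have "\<forall>\<^sub>F e1 in at_right 0. 0 < e1 \<and> e1 < d'"
      unfolding eventually_at_right_field using d' by auto
    thus "\<forall>\<^sub>F e1 in at_right 0. Z \<le> vstar e1"
      using ev
    proof eventually_elim
      case (elim e1)
      hence e1: "0 < e1" "e1 < d'" and st: "two_shock_state e1 e2 um vm up vp (ustar e1) (vstar e1)"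
        by auto
      have G: "GG e1 e2 vm vp (vstar e1) = D" and vg: "vstar e1 > max vm vp"
        using state_GG[OF st assms(2,3)] D_def by auto
      show ?case
      proof (rule ccontr)
        assume "\<not> Z \<le> vstar e1"
        hence "vstar e1 \<le> M" using M by simp
        hence "GG e1 e2 vm vp (vstar e1) \<le> 2 * sqrt (e2^2 + 16*e1*M^2)"
          using GG_bound[OF e1(1) assms(1-3)] vg by simp
        moreover have "2 * sqrt (e2^2 + 16*e1*M^2) < D"
          using small_bound[OF e1(1) assms(1) M(1) D] e1 d'_def by simp
        ultimately show False using G by simp
      qed
    qed
  qed
qed

end
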